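(* For every integer $L\geq 0$, \[ \sum_{j=-\infty}^{\infty} (-1)^j q^{j^2} \left(\frac{j+1}{3}\right) {2L \brack L+j}_{q^2} = \frac{(q^3;q^6)_L}{(q;q^2)_L}. \]
   Context: For a variable $a$ and integer $n\ge 0$, $(a;q)_n=(1-a)(1-aq)\cdots(1-aq^{n-1})$ (with $(a;q)_0=1$). The $q$-binomial coefficient is ${A \brack B}_q=\frac{(q;q)_A}{(q;q)_B(q;q)_{A-B}}$ if $0\le B\le A$ are integers, and $0$ otherwise; ${A\brack B}_{q^2}$ is the same with $q$ replaced by $q^2$. $\left(\frac{j}{3}\right)$ is the Legendre symbol modulo 3: it equals $1$ if $j\equiv 1 \pmod 3$, $-1$ if $j\equiv -1\pmod 3$, and $0$ if $3\mid j$. *)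

theory Defs
  imports "HOL-Analysis.Analysis"
begin

definition qpoch :: "'a::comm_ring_1 \<Rightarrow> 'a \<Rightarrow> nat \<Rightarrow> 'a" where
  "qpoch a q n = (\<Prod>i<n. 1 - a * q ^ i)"

definition qbinom :: "'a::field \<Rightarrow> int \<Rightarrow> int \<Rightarrow> 'a" where
  "qbinom q A B = (if 0 \<le> B \<and> B \<le> A
      then qpoch q q (nat A) / (qpoch q q (nat B) * qpoch q q (nat (A - B)))
      else 0)"

definition leg3 :: "int \<Rightarrow> int" where
  "leg3 j = (if j mod 3 = 1 then 1 else if j mod 3 = 2 then -1 else 0)"

end

theory Submission
  imports Defs
begin

definition qb :: "'a::field \<Rightarrow> nat \<Rightarrow> nat \<Rightarrow> 'a" where
  "qb p n k = qbinom p (int n) (int k)"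

lemma qpoch_Suc: "qpoch a q (Suc n) = qpoch a q n * (1 - a * q ^ n)"
  by (simp add: qpoch_def)

lemma qpoch_nz:
  fixes p :: "'a::field"
  assumes "\<forall>i. 1 - p ^ Suc i \<noteq> 0"
  shows "qpoch p p n \<noteq> 0"
proof -
  have "\<forall>a. p * p ^ a \<noteq> 1"
  proof
    fix a
    from assms have "1 - p ^ Suc a \<noteq> 0" by blast
    thus "p * p ^ a \<noteq> 1" by simp
  qed
  thus ?thesis unfolding qpoch_def by (subst prod_zero_iff) auto
qed

lemma qb_0:
  fixes p :: "'a::field"
  assumes "\<forall>i. 1 - p ^ Suc i \<noteq> 0"
  shows "qb p n 0 = 1"
proof -
  have "qpoch p p 0 = 1" by (simp add: qpoch_def)
  thus ?thesis using qpoch_nz[OF assms, of n] by (simp add: qb_def qbinom_def)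
qed

lemma qb_gt: "n < k \<Longrightarrow> qb p n k = 0"
  by (simp add: qb_def qbinom_def)

lemma qb_nn:
  fixes p :: "'a::field"
  assumes "\<forall>i. 1 - p ^ Suc i \<noteq> 0"
  shows "qb p n n = 1"
proof -
  have "qpoch p p 0 = 1" by (simp add: qpoch_def)
  thus ?thesis using qpoch_nz[OF assms, of n] by (simp add: qb_def qbinom_def)
qed

lemma alg1:
  fixes A B C u v :: "'a::field"
  assumes "A \<noteq> 0" "B \<noteq> 0" "u \<noteq> 0" "v \<noteq> 0"
  shows "C * (1 - (1-u) * (1-v)) / (A * u * (B * v)) = C / (A * (B * v)) + (1-u) * (C / (A * u * B))"
  using assms by (simp add: field_simps)
lemma alg:
  fixes A B C x y :: "'a::field"
  assumes "A \<noteq> 0" "B \<noteq> 0" "1 - x \<noteq> 0" "1 - y \<noteq> 0"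
  shows "C * (1 - x * y) / (A * (1 - x) * (B * (1 - y))) = C / (A * (B * (1 - y))) + x * (C / (A * (1 - x) * B))"
  using alg1[OF assms, of C] by simp

lemma qb_pascal:
  fixes p :: "'a::field"
  assumes nz: "\<forall>i. 1 - p ^ Suc i \<noteq> 0"
  shows "qb p (Suc n) (Suc k) = qb p n k + p ^ Suc k * qb p n (Suc k)"
proof (cases "k < n")
  case True
  define a where "a = n - Suc k"
  have n: "n = k + Suc a" using True by (simp add: a_def)
  define P where "P = qpoch p p"
  have PS: "P (Suc m) = P m * (1 - p ^ Suc m)" for m
    by (simp add: P_def qpoch_Suc)
  have Pnz: "P m \<noteq> 0" for m using qpoch_nz[OF nz] by (simp add: P_def)
  have h1: "nat (int n - int k) = Suc a" "nat (int n - int (Suc k)) = a"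
    "nat (int (Suc n) - int (Suc k)) = Suc a" using n by simp_all
  have e1: "qb p n k = P (k + Suc a) / (P k * P (Suc a))"
    unfolding qb_def qbinom_def P_def nat_int h1 using n by simp
  have e2: "qb p n (Suc k) = P (k + Suc a) / (P (Suc k) * P a)"
    unfolding qb_def qbinom_def P_def nat_int h1 using n by simp
  have e3: "qb p (Suc n) (Suc k) = P (Suc (k + Suc a)) / (P (Suc k) * P (Suc a))"
    unfolding qb_def qbinom_def P_def nat_int h1 using n by simp
  have X: "p ^ Suc (k + Suc a) = p ^ Suc k * p ^ Suc a"
    by (simp add: power_add[symmetric])
  have n1: "1 - p ^ Suc k \<noteq> 0" "1 - p ^ Suc a \<noteq> 0" using nz by auto
  show ?thesis
    unfolding e1 e2 e3 PS X using Pnz n1 by (rule_tac alg) auto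
next
  case False
  then show ?thesis
  proof (cases "k = n")
    case True
    then show ?thesis by (simp add: qb_nn[OF nz] qb_gt)
  next
    case False
    with \<open>\<not> k < n\<close> have "n < k" by simp
    then show ?thesis by (simp add: qb_gt)
  qed
qed


lemma exp1: "(q::'a::comm_ring_1) ^ (Suc k * k) = q ^ (k * (k - 1)) * (q^2) ^ k"
proof (cases k)
  case 0 then show ?thesis by simp
next
  case (Suc m)
  have "Suc k * k = k * (k - 1) + 2 * k" using Suc by simp
  then have "q ^ (Suc k * k) = q ^ (k * (k - 1)) * q ^ (2 * k)" by (simp only: power_add)
  then show ?thesis by (metis power_mult)
qed

lemma exp1': "(q::'a::comm_ring_1) ^ (k + k * k) = (q^2) ^ k * q ^ (k * (k - 1))"
  using exp1[of q k] by (simp add: mult_ac)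

lemma qbinomial:
  fixes q :: "'a::field"
  assumes nz: "\<forall>i. 1 - (q^2) ^ Suc i \<noteq> 0"
  shows "(\<Prod>m<n. y + x * (q^2)^m) = (\<Sum>k\<le>n. q^(k*(k-1)) * qb (q^2) n k * x^k * y^(n-k))"
proof (induction n arbitrary: x)
  case 0
  then show ?case using qb_0[OF nz] by simp
next
  case (Suc n)
  define S where "S = (\<Sum>k\<le>n. q^(k*(k-1)) * qb (q^2) n k * (x*q^2)^k * y^(n-k))"
  have L: "(\<Prod>m<Suc n. y + x * (q^2)^m) = (y + x) * S"
  proof -
    have "(\<Prod>m<Suc n. y + x * (q^2)^m) = (y + x) * (\<Prod>m<n. y + (x * q^2) * (q^2)^m)"
      by (subst prod.lessThan_Suc_shift) (simp add: mult.assoc)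
    also have "\<dots> = (y + x) * S" unfolding S_def by (subst Suc.IH) simp
    finally show ?thesis .
  qed
  define t where "t k = q^(k*(k-1)) * qb (q^2) (Suc n) k * x^k * y^(Suc n-k)" for k
  define g where "g k = q^(k*(k-1)) * qb (q^2) n k * (x*q^2)^k * y^(Suc n-k)" for k
  define A where "A = (\<Sum>k\<le>n. q^(Suc k * k) * qb (q^2) n k * x^Suc k * y^(n-k))"
  define B where "B = (\<Sum>k\<le>n. g (Suc k))"
  have tS: "t (Suc k) = q^(Suc k * k) * qb (q^2) n k * x^Suc k * y^(n-k) + g (Suc k)" for k
    unfolding t_def g_def qb_pascal[OF nz] by (simp add: algebra_simps power_mult_distrib)
  have R1: "(\<Sum>k\<le>Suc n. t k) = y^Suc n + A + B"
    unfolding sum.atMost_Suc_shift tS sum.distrib A_def B_def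
    by (simp add: t_def qb_0[OF nz] add.assoc)
  have A: "A = x * S"
    unfolding A_def S_def sum_distrib_left
    by (rule sum.cong) (simp_all add: exp1' power_mult_distrib mult_ac)
  have g0: "g 0 = y ^ Suc n" by (simp add: g_def qb_0[OF nz])
  have gS: "g (Suc n) = 0" by (simp add: g_def qb_gt)
  have "(\<Sum>k\<le>Suc n. g k) = g 0 + B" unfolding B_def by (rule sum.atMost_Suc_shift)
  moreover have "(\<Sum>k\<le>Suc n. g k) = y * S"
    unfolding sum.atMost_Suc gS S_def sum_distrib_left
    by (simp, rule sum.cong) (simp_all add: g_def Suc_diff_le mult_ac exp1')
  ultimately have B: "B = y * S - y ^ Suc n" using g0 by (simp add: algebra_simps)
  show ?case unfolding L t_def[symmetric] R1 A B by (simp add: algebra_simps)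
qed


lemma split_prod: "(\<Prod>m<a+(b::nat). f m) = (\<Prod>m<a. f m) * (\<Prod>i<b. f (a+i))"
  by (induction b) (simp_all add: mult_ac)

lemma G: "(\<Prod>i<L. ((q::'a::comm_ring_1)^2)^i) = q^(L*(L-1))"
proof (induction L)
  case 0 then show ?case by simp
next
  case (Suc L)
  then show ?case using exp1[of q L] by (simp add: mult_ac)
qed

lemma expo:
  assumes "1 \<le> L" "k \<le> 2*L"
  shows "k*(k-1) + (2*L-1)*(2*L-k) = L*(L-1) + (2*L-1)*L + nat((int k - int L)^2)"
proof -
  have a1: "int k * int (k-1) = int k * (int k - 1)" by (cases k) auto
  have a4: "int L * int (L-1) = int L * (int L - 1)" by (cases L) auto
  have a2: "int (2*L-1) = 2*int L - 1" using assms by simp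
  have a3: "int (2*L-k) = 2*int L - int k" using assms by simp
  have a5: "int (nat((int k - int L)^2)) = (int k - int L)^2" by simp
  have "int (k*(k-1) + (2*L-1)*(2*L-k)) = int (L*(L-1) + (2*L-1)*L + nat((int k - int L)^2))"
    unfolding of_nat_add of_nat_mult a1 a2 a3 a4 a5 by (simp add: algebra_simps power2_eq_square)
  then show ?thesis by (simp only: of_nat_eq_iff)
qed

lemma jtp:
  fixes q z :: "'a::field"
  assumes q0: "q \<noteq> 0" and nz: "\<forall>i. 1 - (q^2)^Suc i \<noteq> 0"
  shows "(\<Sum>k\<le>2*L. q^nat((int k - int L)^2) * z^k * qb (q^2) (2*L) k)
       = (\<Prod>i<L. (z + q^(2*i+1)) * (1 + z*q^(2*i+1)))"
proof (cases "L = 0")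
  case True then show ?thesis using qb_0[OF nz] by simp
next
  case False
  hence L1: "1 \<le> L" by simp
  define D where "D = q^(L*(L-1)) * (q^(2*L-1))^L"
  have D0: "D \<noteq> 0" using q0 by (simp add: D_def)
  have "(\<Prod>m<2*L. q^(2*L-1) + z*(q^2)^m)
      = (\<Sum>k\<le>2*L. q^(k*(k-1)) * qb (q^2) (2*L) k * z^k * (q^(2*L-1))^(2*L-k))"
    by (rule qbinomial[OF nz])
  also have "\<dots> = D * (\<Sum>k\<le>2*L. q^nat((int k - int L)^2) * z^k * qb (q^2) (2*L) k)"
    unfolding sum_distrib_left
  proof (rule sum.cong[OF refl])
    fix k assume "k \<in> {..2*L}"
    hence k: "k \<le> 2*L" by simp
    have "q^(k*(k-1)) * (q^(2*L-1))^(2*L-k) = q^(k*(k-1) + (2*L-1)*(2*L-k))"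
      by (simp add: power_add power_mult)
    also have "\<dots> = q^(L*(L-1)) * (q^(2*L-1))^L * q^nat((int k - int L)^2)"
      unfolding expo[OF L1 k] by (simp only: power_add power_mult)
    finally have "q^(k*(k-1)) * (q^(2*L-1))^(2*L-k) = D * q^nat((int k - int L)^2)"
      by (simp add: D_def)
    then show "q^(k*(k-1)) * qb (q^2) (2*L) k * z^k * (q^(2*L-1))^(2*L-k)
        = D * (q^nat((int k - int L)^2) * z^k * qb (q^2) (2*L) k)"
      by (simp add: mult_ac)
  qed
  finally have 1: "(\<Prod>m<2*L. q^(2*L-1) + z*(q^2)^m)
      = D * (\<Sum>k\<le>2*L. q^nat((int k - int L)^2) * z^k * qb (q^2) (2*L) k)" .
  define f where "f m = q^(2*L-1) + z*(q^2)^m" for m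
  have "(\<Prod>m<2*L. q^(2*L-1) + z*(q^2)^m) = (\<Prod>m<L. f m) * (\<Prod>i<L. f (L+i))"
    using split_prod[of f L L] by (simp add: f_def mult_2)
  also have "(\<Prod>m<L. f m) = (\<Prod>i<L. f (L - Suc i))"
    by (rule prod.nat_diff_reindex[symmetric])
  also have "\<dots> = (\<Prod>i<L. (q^2)^(L - Suc i) * (z + q^(2*i+1)))"
  proof (rule prod.cong[OF refl])
    fix i assume "i \<in> {..<L}"
    hence "2*(L - Suc i) + (2*i+1) = 2*L-1" by simp
    hence "(q^2)^(L - Suc i) * q^(2*i+1) = q^(2*L-1)"
      by (metis power_add power_mult)
    then show "f (L - Suc i) = (q^2)^(L - Suc i) * (z + q^(2*i+1))"
      by (simp add: f_def algebra_simps)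
  qed
  also have "\<dots> = (\<Prod>i<L. (q^2)^(L - Suc i)) * (\<Prod>i<L. z + q^(2*i+1))"
    by (rule prod.distrib)
  also have "(\<Prod>i<L. (q^2)^(L - Suc i)) = q^(L*(L-1))"
    using prod.nat_diff_reindex[of "\<lambda>i. (q^2)^i" L] G[where L=L and q=q] by simp
  also have "(\<Prod>i<L. f (L+i)) = (\<Prod>i<L. q^(2*L-1) * (1 + z*q^(2*i+1)))"
  proof (rule prod.cong[OF refl])
    fix i assume "i \<in> {..<L}"
    have "2*(L+i) = (2*L-1) + (2*i+1)" using L1 by simp
    hence "(q^2)^(L+i) = q^(2*L-1) * q^(2*i+1)"
      by (metis power_add power_mult)
    then show "f (L+i) = q^(2*L-1) * (1 + z*q^(2*i+1))"
      by (simp add: f_def algebra_simps)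
  qed
  also have "\<dots> = (q^(2*L-1))^L * (\<Prod>i<L. 1 + z*q^(2*i+1))"
    by (simp add: prod.distrib)
  finally have 2: "(\<Prod>m<2*L. q^(2*L-1) + z*(q^2)^m)
      = D * (\<Prod>i<L. (z + q^(2*i+1)) * (1 + z*q^(2*i+1)))"
    by (simp add: D_def prod.distrib mult_ac)
  from 1 2 D0 show ?thesis by simp
qed


lemma cube_one: assumes "w^2 + w + 1 = (0::'a::comm_ring_1)" shows "w^3 = 1"
proof -
  have "w^3 - 1 = (w - 1) * (w^2 + w + 1)" by (simp add: algebra_simps power2_eq_square power3_eq_cube)
  then show ?thesis using assms by simp
qed

lemma pw: "(q::'a::comm_ring_1)^(2*i+1) = q * (q^2)^i"
  by (simp add: power_mult)

lemma prod_RHS: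
  fixes q :: complex
  assumes "qpoch q (q^2) L \<noteq> 0"
  shows "(\<Prod>i<L. 1 + q^(2*i+1) + (q^(2*i+1))^2) = qpoch (q^3) (q^6) L / qpoch q (q^2) L"
proof -
  have "qpoch (q^3) (q^6) L = (\<Prod>i<L. (1 - q^(2*i+1)) * (1 + q^(2*i+1) + (q^(2*i+1))^2))"
    unfolding qpoch_def
  proof (rule prod.cong[OF refl])
    fix i
    have a: "(q^(2*i+1))^3 = q^((2*i+1)*3)" by (rule power_mult[symmetric])
    have b: "(2*i+1)*3 = 3 + 6*i" by simp
    have c: "q^(3+6*i) = q^3*(q^6)^i" by (simp only: power_add power_mult)
    have "q^3 * (q^6)^i = (q^(2*i+1))^3" by (simp only: a b c)
    moreover have "\<And>x::complex. 1 - x^3 = (1 - x) * (1 + x + x^2)"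
      by (simp add: algebra_simps power2_eq_square power3_eq_cube)
    ultimately show "1 - q^3 * (q^6)^i = (1 - q^(2*i+1)) * (1 + q^(2*i+1) + (q^(2*i+1))^2)"
      by simp
  qed
  also have "\<dots> = qpoch q (q^2) L * (\<Prod>i<L. 1 + q^(2*i+1) + (q^(2*i+1))^2)"
    unfolding prod.distrib qpoch_def pw ..
  finally show ?thesis using assms by simp
qed

lemma omega_sum:
  fixes q w :: complex
  assumes w: "w^2 + w + 1 = 0" and q0: "q \<noteq> 0" and nz: "\<forall>i. 1 - (q^2)^Suc i \<noteq> 0"
    and nz2: "qpoch q (q^2) L \<noteq> 0"
  shows "(\<Sum>k\<le>2*L. (-1)^(k+L) * w^(k+2*L) * q^nat((int k - int L)^2) * qb (q^2) (2*L) k)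
       = qpoch (q^3) (q^6) L / qpoch q (q^2) L"
proof -
  define P where "P = (\<Prod>i<L. 1 + q^(2*i+1) + (q^(2*i+1))^2)"
  have w3: "w^3 = 1" by (rule cube_one[OF w])
  have "(\<Sum>k\<le>2*L. q^nat((int k - int L)^2) * (-w)^k * qb (q^2) (2*L) k)
       = (\<Prod>i<L. ((-w) + q^(2*i+1)) * (1 + (-w)*q^(2*i+1)))"
    by (rule jtp[OF q0 nz])
  also have "\<dots> = (\<Prod>i<L. (-w) * (1 + q^(2*i+1) + (q^(2*i+1))^2))"
  proof (rule prod.cong[OF refl])
    fix i
    have "w^2 = (w^2 + w + 1) - w - 1" by simp
    hence "w^2 = - w - 1" using w by simp
    then have "\<And>x. (-w + x) * (1 + (-w)*x) = (-w) * (1 + x + x^2)"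
    proof -
      fix x
      assume h: "w^2 = - w - 1"
      have "(-w + x) * (1 + (-w)*x) = -w + w^2*x + x - w*x^2" by (simp add: algebra_simps power2_eq_square)
      also have "\<dots> = -w + (-w-1)*x + x - w*x^2" by (simp only: h)
      also have "\<dots> = (-w) * (1 + x + x^2)" by (simp add: algebra_simps)
      finally show "(-w + x) * (1 + (-w)*x) = (-w) * (1 + x + x^2)" .
    qed
    then show "((-w) + q^(2*i+1)) * (1 + (-w)*q^(2*i+1)) = (-w) * (1 + q^(2*i+1) + (q^(2*i+1))^2)"
      by blast
  qed
  also have "\<dots> = (-w)^L * P" unfolding P_def by (simp only: prod.distrib prod_constant card_lessThan)
  finally have 1: "(\<Sum>k\<le>2*L. q^nat((int k - int L)^2) * (-w)^k * qb (q^2) (2*L) k) = (-w)^L * P" .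
  have "(\<Sum>k\<le>2*L. (-1)^(k+L) * w^(k+2*L) * q^nat((int k - int L)^2) * qb (q^2) (2*L) k)
      = ((-1)^L * w^(2*L)) * (\<Sum>k\<le>2*L. q^nat((int k - int L)^2) * (-w)^k * qb (q^2) (2*L) k)"
    unfolding sum_distrib_left
    by (rule sum.cong[OF refl]) (simp add: power_add power_minus[of w] mult_ac)
  also have "\<dots> = ((-1)^L * (-1)^L) * (w^(2*L) * w^L) * P"
    unfolding 1 unfolding power_minus[of w] by (simp add: mult_ac)
  also have "w^(2*L) * w^L = (w^3)^L"
  proof -
    have e: "2*L + L = 3*L" by simp
    have "w^(2*L) * w^L = w^(2*L+L)" by (rule power_add[symmetric])
    also have "\<dots> = w^(3*L)" by (simp only: e)
    also have "\<dots> = (w^3)^L" by (rule power_mult)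
    finally show ?thesis .
  qed
  also have "(-1)^L * (-1)^L = (1::complex)"
    by (simp add: power_mult_distrib[symmetric])
  finally show ?thesis using prod_RHS[OF nz2] P_def w3 by simp
qed


definition om :: complex where "om = Complex (-1/2) (sqrt 3 / 2)"

lemma om_eq: "om^2 + om + 1 = 0"
  by (simp add: om_def complex_eq_iff power2_eq_square)

lemma om3: "om^3 = 1" by (rule cube_one[OF om_eq])

lemma om4: "(om^2)^2 = om"
proof -
  have "(om^2)^2 = om^3 * om" by (simp add: power2_eq_square power3_eq_cube mult_ac)
  then show ?thesis using om3 by simp
qed

lemma om2_eq: "(om^2)^2 + om^2 + 1 = 0"
  unfolding om4 using om_eq by (simp add: add_ac)

lemma pow_mod3: assumes "w^3 = (1::'a::comm_ring_1)" shows "w^m = w^(m mod 3)"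
proof -
  have "w^m = w^(3*(m div 3) + m mod 3)" by simp
  also have "\<dots> = (w^3)^(m div 3) * w^(m mod 3)" by (simp only: power_add power_mult)
  finally show ?thesis using assms by simp
qed

lemma om_sum: "om^m + (om^2)^m = (if 3 dvd m then 2 else -1)"
proof -
  have "(om^2)^3 = om^(2*3)" by (rule power_mult[symmetric])
  also have "\<dots> = om^(3*2)" by simp
  also have "\<dots> = (om^3)^2" by (rule power_mult)
  finally have o23: "(om^2)^3 = 1" using om3 by simp
  have a: "om^m = om^(m mod 3)" by (rule pow_mod3[OF om3])
  have b: "(om^2)^m = (om^2)^(m mod 3)" by (rule pow_mod3[OF o23])
  have s1: "om + om^2 = -1"
  proof -
    have "om + om^2 = (om^2 + om + 1) - 1" by simp
    then show ?thesis using om_eq by simp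
  qed
  have "m mod 3 = 0 \<or> m mod 3 = 1 \<or> m mod 3 = 2" by arith
  moreover
  { assume h: "m mod 3 = 0"
    hence "3 dvd m" by presburger
    hence ?thesis unfolding a b h by simp }
  moreover
  { assume h: "m mod 3 = 1"
    hence "\<not> 3 dvd m" by presburger
    hence ?thesis unfolding a b h using s1 by simp }
  moreover
  { assume h: "m mod 3 = 2"
    hence "\<not> 3 dvd m" by presburger
    hence ?thesis unfolding a b h using s1 om4 by (simp add: add.commute) }
  ultimately show ?thesis by auto
qed

lemma leg3_sum: "leg3 (j+1) + leg3 (1-j) = (if 3 dvd j then 2 else -1)"
  unfolding leg3_def by presburger

lemma m1pow: "(-1::complex)^(a + 2*b) = (-1)^a"
  by (simp add: power_add power_mult)

lemma parity: "(-1::complex)^(nat \<bar>int k - int L\<bar>) = (-1)^(k+L)"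
proof (cases "k \<le> L")
  case True
  then have "nat \<bar>int k - int L\<bar> = L - k" "k + L = (L - k) + 2*k" by auto
  then show ?thesis by (simp only: m1pow)
next
  case False
  then have "nat \<bar>int k - int L\<bar> = k - L" "k + L = (k - L) + 2*L" by auto
  then show ?thesis by (simp only: m1pow)
qed

lemma qb_sym: "k \<le> n \<Longrightarrow> qb p n (n - k) = qb p n k"
  by (simp add: qb_def qbinom_def of_nat_diff mult.commute)


lemma lhs_finite:
  fixes q :: complex
  shows "(\<Sum>\<^sub>\<infinity> j::int. (-1) ^ nat \<bar>j\<bar> * q ^ nat (j^2) * of_int (leg3 (j + 1)) * qbinom (q^2) (2 * int L) (int L + j))
   = (\<Sum>j\<in>{-int L..int L}. (-1) ^ nat \<bar>j\<bar> * q ^ nat (j^2) * of_int (leg3 (j + 1)) * qbinom (q^2) (2 * int L) (int L + j))"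
proof -
  have "(\<Sum>\<^sub>\<infinity> j::int. (-1) ^ nat \<bar>j\<bar> * q ^ nat (j^2) * of_int (leg3 (j + 1)) * qbinom (q^2) (2 * int L) (int L + j))
    = (\<Sum>\<^sub>\<infinity> j\<in>{-int L..int L}. (-1) ^ nat \<bar>j\<bar> * q ^ nat (j^2) * of_int (leg3 (j + 1)) * qbinom (q^2) (2 * int L) (int L + j))"
    by (rule infsum_cong_neutral) (auto simp: qbinom_def)
  then show ?thesis by simp
qed

lemma lhs_k:
  fixes q :: complex
  shows "(\<Sum>j\<in>{-int L..int L}. (-1) ^ nat \<bar>j\<bar> * q ^ nat (j^2) * of_int (leg3 (j + 1)) * qbinom (q^2) (2 * int L) (int L + j))
   = (\<Sum>k\<le>2*L. ((-1)^(k+L) * q^nat((int k - int L)^2) * qb (q^2) (2*L) k) * of_int (leg3 (int k - int L + 1)))"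
proof (rule sum.reindex_bij_witness[where i="\<lambda>k. int k - int L" and j="\<lambda>j. nat (j + int L)"])
  fix j assume j: "j \<in> {-int L..int L}"
  define k where "k = nat (j + int L)"
  have jk: "int k - int L = j" using j by (simp add: k_def)
  have "(-1::complex)^(k+L) = (-1)^nat \<bar>j\<bar>" using parity[of k L] jk by simp
  moreover have "qb (q^2) (2*L) k = qbinom (q^2) (2 * int L) (int L + j)"
    unfolding qb_def using jk by (simp add: algebra_simps)
  ultimately show "((-1)^(nat (j + int L)+L) * q^nat((int (nat (j + int L)) - int L)^2) * qb (q^2) (2*L) (nat (j + int L)))
      * of_int (leg3 (int (nat (j + int L)) - int L + 1))
    = (-1) ^ nat \<bar>j\<bar> * q ^ nat (j^2) * of_int (leg3 (j + 1)) * qbinom (q^2) (2 * int L) (int L + j)"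
    unfolding k_def[symmetric] jk by (simp add: mult_ac)
qed auto

lemma lhs_sym:
  fixes q :: complex
  shows "(\<Sum>k\<le>2*L. ((-1)^(k+L) * q^nat((int k - int L)^2) * qb (q^2) (2*L) k) * of_int (leg3 (int k - int L + 1)))
    = (\<Sum>k\<le>2*L. ((-1)^(k+L) * q^nat((int k - int L)^2) * qb (q^2) (2*L) k) * of_int (leg3 (1 - (int k - int L))))"
proof -
  define a where "a k = (-1::complex)^(k+L) * q^nat((int k - int L)^2) * qb (q^2) (2*L) k" for k
  have "(\<Sum>k\<le>2*L. a k * of_int (leg3 (int k - int L + 1)))
      = (\<Sum>k\<in>{0..2*L}. a (2*L + 0 - k) * of_int (leg3 (int (2*L + 0 - k) - int L + 1)))"
    unfolding atMost_atLeast0 by (rule sum.atLeastAtMost_rev)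
  also have "\<dots> = (\<Sum>k\<le>2*L. a k * of_int (leg3 (1 - (int k - int L))))"
    unfolding atMost_atLeast0
  proof (rule sum.cong[OF refl])
    fix k assume "k \<in> {0..2*L}"
    hence k: "k \<le> 2*L" by simp
    have i: "int (2*L - k) = 2 * int L - int k" using k by simp
    have "(-1::complex)^(2*L - k + L) = (-1)^(k+L)"
    proof -
      have e: "(2*L - k + L) + 2*k = (k + L) + 2*L" using k by simp
      have "(-1::complex)^(2*L - k + L) = (-1)^((2*L - k + L) + 2*k)" by (simp only: m1pow)
      also have "\<dots> = (-1)^(k+L)" by (simp only: e m1pow)
      finally show ?thesis .
    qed
    moreover have "nat((int (2*L - k) - int L)^2) = nat((int k - int L)^2)"
      unfolding i by (simp add: power2_eq_square algebra_simps)
    moreover have "qb (q^2) (2*L) (2*L - k) = qb (q^2) (2*L) k" by (rule qb_sym[OF k])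
    moreover have "int (2*L - k) - int L + 1 = 1 - (int k - int L)" unfolding i by simp
    ultimately show "a (2*L + 0 - k) * of_int (leg3 (int (2*L + 0 - k) - int L + 1))
      = a k * of_int (leg3 (1 - (int k - int L)))"
      unfolding a_def by (simp add: algebra_simps)
  qed
  finally show ?thesis unfolding a_def .
qed

lemma norm_nz: "norm (z::complex) < 1 \<Longrightarrow> 1 - z \<noteq> 0"
  by auto

theorem theorem2p4:
  fixes q :: complex and L :: nat
  assumes "norm q < 1"
  shows "(\<Sum>\<^sub>\<infinity> j::int. (-1) ^ nat \<bar>j\<bar> * q ^ nat (j^2) * of_int (leg3 (j + 1))
             * qbinom (q^2) (2 * int L) (int L + j))
         = qpoch (q^3) (q^6) L / qpoch q (q^2) L"
proof (cases "q = 0")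
  case True
  have p0: "qpoch (0::complex) 0 n = 1" for n by (simp add: qpoch_def)
  have "(\<Sum>j\<in>{-int L..int L}. (-1) ^ nat \<bar>j\<bar> * q ^ nat (j^2) * of_int (leg3 (j + 1)) * qbinom (q^2) (2 * int L) (int L + j))
     = (\<Sum>j\<in>{-int L..int L}. if j = 0 then (1::complex) else 0)"
  proof (rule sum.cong[OF refl])
    fix j :: int
    show "(-1) ^ nat \<bar>j\<bar> * q ^ nat (j^2) * of_int (leg3 (j + 1)) * qbinom (q^2) (2 * int L) (int L + j)
      = (if j = 0 then 1 else 0)"
      using True by (simp add: leg3_def qbinom_def p0)
  qed
  also have "\<dots> = 1" by simp
  finally show ?thesis unfolding lhs_finite using True by (simp add: p0)
next
  case False
  have nq: "norm q ^ 2 < 1" using assms by (simp add: power_less_one_iff)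
  have nz: "\<forall>i. 1 - (q^2)^Suc i \<noteq> 0"
  proof
    fix i
    have "norm ((q^2)^Suc i) = (norm q ^ 2) ^ Suc i" by (simp only: norm_power)
    also have "\<dots> < 1" by (rule power_Suc_less_one) (use False nq in auto)
    finally show "1 - (q^2)^Suc i \<noteq> 0" by (rule norm_nz)
  qed
  have nz2: "qpoch q (q^2) L \<noteq> 0"
  proof -
    have h: "1 - q * (q^2)^i \<noteq> 0" for i
    proof -
      have "norm (q * (q^2)^i) = norm q * (norm q ^ 2) ^ i" by (simp add: norm_mult norm_power)
      also have "\<dots> \<le> norm q * 1"
        by (rule mult_left_mono) (use nq in \<open>simp_all add: power_le_one\<close>)
      also have "\<dots> < 1" using assms by simp
      finally show "1 - q * (q^2)^i \<noteq> 0" by (rule norm_nz)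
    qed
    show ?thesis unfolding qpoch_def using h by (subst prod_zero_iff) auto
  qed
  define R where "R = qpoch (q^3) (q^6) L / qpoch q (q^2) L"
  define a where "a k = (-1::complex)^(k+L) * q^nat((int k - int L)^2) * qb (q^2) (2*L) k" for k
  define S where "S = (\<Sum>k\<le>2*L. a k * of_int (leg3 (int k - int L + 1)))"
  have LS: "(\<Sum>\<^sub>\<infinity> j::int. (-1) ^ nat \<bar>j\<bar> * q ^ nat (j^2) * of_int (leg3 (j + 1))
             * qbinom (q^2) (2 * int L) (int L + j)) = S"
    unfolding lhs_finite lhs_k S_def a_def ..
  have S2: "S = (\<Sum>k\<le>2*L. a k * of_int (leg3 (1 - (int k - int L))))"
    unfolding S_def a_def by (rule lhs_sym)
  have dv: "(3 dvd (k + 2*L)) = (3 dvd (int k - int L))" for k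
  proof -
    have "int (k + 2*L) = (int k - int L) + 3 * int L" by simp
    then have "(3 dvd int (k + 2*L)) = (3 dvd (int k - int L))" by presburger
    then show ?thesis by presburger
  qed
  have "2 * S = (\<Sum>k\<le>2*L. a k * of_int (leg3 (int k - int L + 1) + leg3 (1 - (int k - int L))))"
  proof -
    have "2 * S = S + S" by simp
    also have "\<dots> = (\<Sum>k\<le>2*L. a k * of_int (leg3 (int k - int L + 1)))
        + (\<Sum>k\<le>2*L. a k * of_int (leg3 (1 - (int k - int L))))"
      by (simp only: S_def[symmetric] S2[symmetric])
    also have "\<dots> = (\<Sum>k\<le>2*L. a k * of_int (leg3 (int k - int L + 1)) + a k * of_int (leg3 (1 - (int k - int L))))"
      by (rule sum.distrib[symmetric])
    finally show ?thesis by (simp add: distrib_left)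
  qed
  also have "\<dots> = (\<Sum>k\<le>2*L. a k * (om^(k+2*L) + (om^2)^(k+2*L)))"
  proof (rule sum.cong[OF refl])
    fix k
    have "complex_of_int (leg3 (int k - int L + 1) + leg3 (1 - (int k - int L)))
        = (if 3 dvd (int k - int L) then 2 else -1)"
      unfolding leg3_sum by simp
    also have "\<dots> = om^(k+2*L) + (om^2)^(k+2*L)" unfolding om_sum dv ..
    finally show "a k * complex_of_int (leg3 (int k - int L + 1) + leg3 (1 - (int k - int L)))
        = a k * (om^(k+2*L) + (om^2)^(k+2*L))" by simp
  qed
  also have "\<dots> = (\<Sum>k\<le>2*L. (-1)^(k+L) * om^(k+2*L) * q^nat((int k - int L)^2) * qb (q^2) (2*L) k)
      + (\<Sum>k\<le>2*L. (-1)^(k+L) * (om^2)^(k+2*L) * q^nat((int k - int L)^2) * qb (q^2) (2*L) k)"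
    unfolding sum.distrib[symmetric] a_def by (rule sum.cong[OF refl]) (simp add: algebra_simps)
  also have "\<dots> = 2 * R"
    unfolding omega_sum[OF om_eq False nz nz2] omega_sum[OF om2_eq False nz nz2] R_def by simp
  finally have "S = R" by simp
  then show ?thesis using LS R_def by simp
qed

end
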